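(* Let $n,d,c\in\mathbb{N}$ with $d\ge 50$ and $c\in[d]$, let $\mathcal{F}\subseteq 2^{[n]}$ be a hereditary family with $\delta(\mathcal{F})\ge 2^{d-1}-c+1$, and let $P$ be an isolated pile of $\mathcal{F}$ with $\sum_{x\in P}\omega_{\mathcal{F}}(x)<2^d-c$. Then: (a) $t\ge c$; (b) $t\le 2c-2$; (c) for every $x\in P$, $d_{\mathcal{G}}(x)\ge 2^{d-1}-2c+2$; (d) if $x\in P$ is a bad vertex, then $\{x\}\in\mathcal{N}$; (e) $P$ contains at most $\frac d2-1$ good vertices.
   Context: A family is hereditary if it is closed under taking subsets. $d_{\mathcal{F}}(x)=|\{F\in\mathcal{F}:x\in F\}|$, $\delta(\mathcal{F})=\min_x d_{\mathcal{F}}(x)$, $N(x)=\bigcup_{x\in F\in\mathcal{F}}F$. The weight of $x$ is $\omega_{\mathcal{F}}(x)=\sum_{x\in F\in\mathcal{F}}\frac{1}{|F|}$. A vertex $x$ is good if $|N(x)|\ge d+1$ and bad if $|N(x)|=d$. A set $P\subseteq[n]$ with $|P|=d$ is a pile of $\mathcal{F}$ if $P\subseteq N(y)$ for every $y\in P$, and there exists $z\in P$ with $N(z)=P$; a pile is isolated if it is disjoint from every other pile. Given the pile $P$, let $\mathcal{G}=\{S\subseteq P: S\in\mathcal{F}\}$, $d_{\mathcal{G}}(x)=|\{S\in\mathcal{G}:x\in S\}|$, $t=2^d-|\mathcal{G}|$, $\mathcal{M}=2^{P}\setminus\mathcal{G}$, and $\mathcal{N}=\{P\setminus M: M\in\mathcal{M}\}$.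 *)

theory Defs
  imports Complex_Main
begin

definition hereditary :: "'a set set \<Rightarrow> bool" where
  "hereditary F \<longleftrightarrow> (\<forall>A\<in>F. \<forall>B. B \<subseteq> A \<longrightarrow> B \<in> F)"

definition deg :: "'a set set \<Rightarrow> 'a \<Rightarrow> nat" where
  "deg F x = card {A\<in>F. x \<in> A}"

definition min_deg :: "nat \<Rightarrow> nat set set \<Rightarrow> nat" where
  "min_deg n F = Min ((deg F) ` {1..n})"

definition nbhd :: "'a set set \<Rightarrow> 'a \<Rightarrow> 'a set" where
  "nbhd F x = \<Union>{A\<in>F. x \<in> A}"

definition weight :: "'a set set \<Rightarrow> 'a \<Rightarrow> real" where
  "weight F x = (\<Sum>A\<in>{A\<in>F. x \<in> A}. 1 / real (card A))"

definition good :: "nat \<Rightarrow> 'a set set \<Rightarrow> 'a \<Rightarrow> bool" where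
  "good d F x \<longleftrightarrow> card (nbhd F x) \<ge> d + 1"

definition bad :: "nat \<Rightarrow> 'a set set \<Rightarrow> 'a \<Rightarrow> bool" where
  "bad d F x \<longleftrightarrow> card (nbhd F x) = d"

definition pile :: "nat \<Rightarrow> nat \<Rightarrow> nat set set \<Rightarrow> nat set \<Rightarrow> bool" where
  "pile n d F P \<longleftrightarrow> P \<subseteq> {1..n} \<and> card P = d \<and> (\<forall>y\<in>P. P \<subseteq> nbhd F y)
     \<and> (\<exists>z\<in>P. nbhd F z = P)"

definition isolated_pile :: "nat \<Rightarrow> nat \<Rightarrow> nat set set \<Rightarrow> nat set \<Rightarrow> bool" where
  "isolated_pile n d F P \<longleftrightarrow> pile n d F P \<and>
     (\<forall>Q. pile n d F Q \<and> Q \<noteq> P \<longrightarrow> P \<inter> Q = {})"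

definition pileG :: "'a set set \<Rightarrow> 'a set \<Rightarrow> 'a set set" where
  "pileG F P = {S. S \<subseteq> P \<and> S \<in> F}"

definition pile_t :: "nat \<Rightarrow> 'a set set \<Rightarrow> 'a set \<Rightarrow> int" where
  "pile_t d F P = 2 ^ d - int (card (pileG F P))"

definition pileM :: "'a set set \<Rightarrow> 'a set \<Rightarrow> 'a set set" where
  "pileM F P = Pow P - pileG F P"

definition pileN :: "'a set set \<Rightarrow> 'a set \<Rightarrow> 'a set set" where
  "pileN F P = (\<lambda>M. P - M) ` pileM F P"

end

theory Submission
  imports Defs
begin


lemma sum_swap_card:
  fixes f :: "'a set \<Rightarrow> real"
  assumes "finite P" "finite F"
  shows "(\<Sum>x\<in>P. \<Sum>A\<in>{A\<in>F. x\<in>A}. f A) = (\<Sum>A\<in>F. real (card (A\<inter>P)) * f A)"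
proof -
  have "(\<Sum>x\<in>P. \<Sum>A\<in>{A\<in>F. x\<in>A}. f A) = (\<Sum>x\<in>P. \<Sum>A\<in>F. if x\<in>A then f A else 0)"
    using assms by (simp add: sum.inter_filter)
  also have "\<dots> = (\<Sum>A\<in>F. \<Sum>x\<in>P. if x\<in>A then f A else 0)" by (rule sum.swap)
  also have "\<dots> = (\<Sum>A\<in>F. real (card (A\<inter>P)) * f A)"
  proof (rule sum.cong[OF refl])
    fix A assume "A \<in> F"
    have "(\<Sum>x\<in>P. if x\<in>A then f A else 0) = (\<Sum>x\<in>{x\<in>P. x\<in>A}. f A)"
      using assms by (simp only: sum.inter_filter)
    also have "{x\<in>P. x\<in>A} = A\<inter>P" by auto
    finally show "(\<Sum>x\<in>P. if x\<in>A then f A else 0) = real (card (A\<inter>P)) * f A" by (simp only:) simp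
  qed
  finally show ?thesis .
qed

lemma card_with_elem:
  assumes "finite P" "x \<in> P"
  shows "card {S. S \<subseteq> P \<and> x \<in> S} = 2 ^ (card P - 1)"
proof -
  have e: "{S. S \<subseteq> P \<and> x \<in> S} = insert x ` Pow (P - {x})"
  proof (rule set_eqI, rule iffI)
    fix S assume "S \<in> {S. S \<subseteq> P \<and> x \<in> S}"
    then have "S = insert x (S - {x})" "S - {x} \<in> Pow (P - {x})" by auto
    thus "S \<in> insert x ` Pow (P - {x})" by (rule image_eqI)
  next
    fix S assume "S \<in> insert x ` Pow (P - {x})"
    thus "S \<in> {S. S \<subseteq> P \<and> x \<in> S}" using assms by auto
  qed
  have i: "inj_on (insert x) (Pow (P - {x}))"
  proof (rule inj_onI)
    fix A B assume "A \<in> Pow (P - {x})" "B \<in> Pow (P - {x})" and eq: "insert x A = insert x B"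
    then have "x \<notin> A" "x \<notin> B" by auto
    then have "A = insert x A - {x}" "B = insert x B - {x}" by auto
    thus "A = B" using eq by simp
  qed
  show ?thesis unfolding e using assms i by (simp add: card_image card_Pow card_Diff_singleton)
qed

lemma pow_lin: "7 \<le> s \<Longrightarrow> 16 * s \<le> (2::nat) ^ s"
proof (induction s rule: dec_induct)
  case base then show ?case by simp
next
  case (step m) then show ?case by simp
qed

lemma pow_quad: "13 \<le> r \<Longrightarrow> 4 * r * r \<le> (2::nat) ^ (r - 2)"
proof (induction r rule: dec_induct)
  case base then show ?case by simp
next
  case (step m)
  have a: "13 * m \<le> m * m" using step(1) by (intro mult_right_mono) auto
  have e1: "4 * Suc m * Suc m = 4*(m*m) + 8*m + 4" by (simp add: algebra_simps)
  have e2: "2 * (4 * m * m) = 8 * (m*m)" by simp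
  have "4*(m*m) + 8*m + 4 \<le> 8 * (m*m)" using a step(1) by linarith
  hence "4 * Suc m * Suc m \<le> 2 * (4 * m * m)" by (simp only: e1 e2)
  also have "\<dots> \<le> 2 * 2 ^ (m - 2)" using step by simp
  also have "\<dots> = (2::nat) ^ (Suc m - 2)"
  proof -
    have "Suc m - 2 = Suc (m - 2)" using step(1) by simp
    thus ?thesis by simp
  qed
  finally show ?case .
qed

lemma L3: assumes "2 ^ s < 2 * d" "50 \<le> d" shows "8 * s \<le> (d::nat)"
proof (rule ccontr)
  assume "\<not> 8 * s \<le> d"
  hence "7 \<le> s" using assms by linarith
  hence "16 * s \<le> 2 ^ s" by (rule pow_lin)
  thus False using assms \<open>\<not> 8 * s \<le> d\<close> by linarith
qed

lemma L4: assumes "2 ^ (r - 2) < r * d" "50 \<le> d" shows "4 * r \<le> (d::nat)"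
proof (rule ccontr)
  assume h: "\<not> 4 * r \<le> d"
  hence "13 \<le> r" using assms by linarith
  hence "4 * r * r \<le> 2 ^ (r - 2)" by (rule pow_quad)
  moreover have "r * d \<le> r * (4 * r)" using h by simp
  ultimately show False using assms by linarith
qed



lemma ar1: "2*(Q - c + 1) \<le> g \<Longrightarrow> g + t = 2*Q \<Longrightarrow> c \<le> Q \<Longrightarrow> t + 2 \<le> 2*(c::nat)" by presburger

lemma ar2: "Q + (Q - c + 1) \<le> g \<Longrightarrow> g + t = 2*Q \<Longrightarrow> c \<le> Q \<Longrightarrow> c \<le> t \<Longrightarrow> False" for Q c g t :: nat by linarith

theorem mainTheorem16:
  fixes n d c :: nat and F :: "nat set set" and P :: "nat set"
  assumes "d \<ge> 50" and "1 \<le> c" and "c \<le> d"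
    and "F \<subseteq> Pow {1..n}" and "hereditary F"
    and "min_deg n F \<ge> 2 ^ (d - 1) - c + 1"
    and "isolated_pile n d F P"
    and "(\<Sum>x\<in>P. weight F x) < 2 ^ d - real c"
  shows "pile_t d F P \<ge> int c
    \<and> pile_t d F P \<le> 2 * int c - 2
    \<and> (\<forall>x\<in>P. int (deg (pileG F P) x) \<ge> 2 ^ (d - 1) - 2 * int c + 2)
    \<and> (\<forall>x\<in>P. bad d F x \<longrightarrow> {x} \<in> pileN F P)
    \<and> real (card {x\<in>P. good d F x}) \<le> real d / 2 - 1"
proof -
  have pile: "pile n d F P" using assms(7) unfolding isolated_pile_def by blast
  hence PS: "P \<subseteq> {1..n}" and cP: "card P = d" and Pnb: "\<And>y. y\<in>P \<Longrightarrow> P \<subseteq> nbhd F y"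
    and "\<exists>z\<in>P. nbhd F z = P" unfolding pile_def by auto
  then obtain z where zP: "z \<in> P" and Nz: "nbhd F z = P" by auto
  have finP: "finite P" using PS finite_subset by blast
  have finF: "finite F" using assms(4) finite_subset by blast
  have her: "\<And>A B. A \<in> F \<Longrightarrow> B \<subseteq> A \<Longrightarrow> B \<in> F" using assms(5) unfolding hereditary_def by blast
  have nbsub: "\<And>A x. A \<in> F \<Longrightarrow> x \<in> A \<Longrightarrow> A \<subseteq> nbhd F x" unfolding nbhd_def by blast
  have d1: "2 * 2 ^ (d - 1) = (2::nat) ^ d" using assms(1) by (cases d) auto
  have cle: "c \<le> 2 ^ (d - 1)"
  proof -
    have "d - 1 < 2 ^ (d - 1)" by (rule less_exp)
    thus ?thesis using assms(3) by linarith
  qed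
  define G where "G = pileG F P"
  define Ms where "Ms = pileM F P"
  have G_eq: "G = {S. S \<subseteq> P \<and> S \<in> F}" unfolding G_def pileG_def by simp
  have GPow: "G \<subseteq> Pow P" unfolding G_eq by auto
  have finG: "finite G" using GPow finP finite_subset by blast
  have Ms_eq: "Ms = Pow P - G" unfolding Ms_def pileM_def G_def by simp
  have finMs: "finite Ms" using Ms_eq finP by simp
  have cardGM: "card G + card Ms = 2 ^ d"
  proof -
    have "card Ms = card (Pow P) - card G" unfolding Ms_eq using finG GPow by (rule card_Diff_subset)
    moreover have "card G \<le> card (Pow P)" using GPow finP by (intro card_mono) auto
    ultimately show ?thesis using finP cP by (simp add: card_Pow)
  qed
  define t where "t = card Ms"
  have pt: "pile_t d F P = int t"
    unfolding pile_t_def G_def[symmetric] t_def using cardGM by (metis add_diff_cancel_left' of_nat_add of_nat_numeral of_nat_power)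
  have degP: "\<And>x. x \<in> P \<Longrightarrow> 2 ^ (d - 1) - c + 1 \<le> deg F x"
  proof -
    fix x assume "x \<in> P"
    hence "x \<in> {1..n}" using PS by auto
    hence "min_deg n F \<le> deg F x" unfolding min_deg_def by (intro Min_le) auto
    thus "2 ^ (d - 1) - c + 1 \<le> deg F x" using assms(6) by linarith
  qed
  define h where "h A = real (card (A \<inter> P)) / real (card A)" for A :: "nat set"
  have hnn: "\<And>A. 0 \<le> h A" unfolding h_def by simp
  have W: "(\<Sum>x\<in>P. weight F x) = (\<Sum>A\<in>F. h A)"
    unfolding weight_def h_def using sum_swap_card[OF finP finF, of "\<lambda>A. 1 / real (card A)"] by simp
  define OUT where "OUT = {A\<in>F. \<not> A \<subseteq> P \<and> A \<inter> P \<noteq> {}}"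
  have OUTF: "OUT \<subseteq> F" unfolding OUT_def by auto
  have finOUT: "finite OUT" using OUTF finF finite_subset by blast
  define B where "B = (\<Sum>A\<in>OUT. h A)"
  have Bnn: "0 \<le> B" unfolding B_def by (intro sum_nonneg hnn)
  have WB: "real (card G) - 1 + B \<le> (\<Sum>A\<in>F. h A)"
  proof -
    let ?G' = "G - {{}}"
    have disj: "?G' \<inter> OUT = {}" unfolding OUT_def G_eq by auto
    have sub: "?G' \<union> OUT \<subseteq> F" using OUTF G_eq by auto
    have finG': "finite ?G'" using finG by simp
    have "(\<Sum>A\<in>?G'. h A) = (\<Sum>A\<in>?G'. 1)"
    proof (rule sum.cong[OF refl])
      fix A assume "A \<in> ?G'"
      hence "A \<subseteq> P" "A \<noteq> {}" using G_eq by auto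
      moreover hence "finite A" using finP finite_subset by blast
      ultimately show "h A = 1" unfolding h_def by (simp add: Int_absorb2)
    qed
    hence s1: "(\<Sum>A\<in>?G'. h A) = real (card ?G')" by simp
    have "card G \<le> card (?G' \<union> {{}})" using finG by (intro card_mono) auto
    also have "\<dots> \<le> card ?G' + card {{} :: nat set}" by (rule card_Un_le)
    finally have c1: "real (card G) - 1 \<le> real (card ?G')" by simp
    have "(\<Sum>A\<in>?G' \<union> OUT. h A) = (\<Sum>A\<in>?G'. h A) + B"
      unfolding B_def using finG' finOUT disj by (intro sum.union_disjoint) auto
    moreover have "(\<Sum>A\<in>?G' \<union> OUT. h A) \<le> (\<Sum>A\<in>F. h A)"
      using finF sub hnn by (intro sum_mono2) auto
    ultimately show ?thesis using s1 c1 by linarith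
  qed
  have cardGr: "real (card G) = 2 ^ d - real t" using cardGM unfolding t_def
    by (metis add_diff_cancel_right' of_nat_add of_nat_numeral of_nat_power)
  have Bk: "B < real t - real c + 1" using assms(8) W WB cardGr by linarith
  have ta: "c \<le> t" using Bk Bnn by linarith
  have tb: "t + 2 \<le> 2 * c"
  proof -
    define Gz where "Gz = {A\<in>F. z \<in> A}"
    have Gzsub: "Gz \<subseteq> G" unfolding Gz_def G_eq using nbsub Nz by auto
    define Gz' where "Gz' = (\<lambda>S. S - {z}) ` Gz"
    have Gz'sub: "Gz' \<subseteq> G" unfolding Gz'_def using Gzsub G_eq her by auto
    have dj: "Gz \<inter> Gz' = {}" unfolding Gz_def Gz'_def by auto
    have inj: "inj_on (\<lambda>S. S - {z}) Gz"
    proof (rule inj_onI)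
      fix A A' assume "A \<in> Gz" "A' \<in> Gz" "A - {z} = A' - {z}"
      thus "A = A'" unfolding Gz_def by (metis insert_Diff mem_Collect_eq)
    qed
    have finGz: "finite Gz" using Gzsub finG finite_subset by blast
    have "card (Gz \<union> Gz') = card Gz + card Gz'"
      using dj finGz Gz'_def by (intro card_Un_disjoint) auto
    also have "card Gz' = card Gz" unfolding Gz'_def using inj by (rule card_image)
    finally have "card (Gz \<union> Gz') = 2 * card Gz" by simp
    moreover have "card (Gz \<union> Gz') \<le> card G" using Gzsub Gz'sub finG by (intro card_mono) auto
    moreover have "card Gz = deg F z" unfolding Gz_def deg_def by simp
    ultimately have "2 * card Gz \<le> card G" "2 ^ (d - 1) - c + 1 \<le> card Gz" using degP[OF zP] by auto
    hence "2 * (2 ^ (d - 1) - c + 1) \<le> card G" by (meson mult_le_mono2 order_trans)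
    moreover have "card G + t = 2 * 2 ^ (d - 1)" using cardGM d1 unfolding t_def by simp
    ultimately show ?thesis using cle by (rule ar1)
  qed
  define gx where "gx x = card {S\<in>G. x \<in> S}" for x
  define mx where "mx x = card {M\<in>Ms. x \<in> M}" for x
  define ox where "ox x = card {A\<in>OUT. x \<in> A}" for x
  have split1: "\<And>x. x \<in> P \<Longrightarrow> gx x + mx x = 2 ^ (d - 1)"
  proof -
    fix x assume xP: "x \<in> P"
    have "{S. S \<subseteq> P \<and> x \<in> S} = {S\<in>G. x \<in> S} \<union> {M\<in>Ms. x \<in> M}" using GPow Ms_eq by auto
    moreover have "card ({S\<in>G. x \<in> S} \<union> {M\<in>Ms. x \<in> M}) = gx x + mx x"
      unfolding gx_def mx_def using finG finMs Ms_eq by (intro card_Un_disjoint) auto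
    ultimately show "gx x + mx x = 2 ^ (d - 1)" using card_with_elem[OF finP xP] cP by simp
  qed
  have split2: "\<And>x. x \<in> P \<Longrightarrow> deg F x = gx x + ox x"
  proof -
    fix x assume xP: "x \<in> P"
    have "{A\<in>F. x \<in> A} = {S\<in>G. x \<in> S} \<union> {A\<in>OUT. x \<in> A}" unfolding G_eq OUT_def using xP by auto
    moreover have "card ({S\<in>G. x \<in> S} \<union> {A\<in>OUT. x \<in> A}) = gx x + ox x"
    proof -
      have "finite {S\<in>G. x \<in> S}" "finite {A\<in>OUT. x \<in> A}" using finG finOUT by auto
      moreover have "{S\<in>G. x \<in> S} \<inter> {A\<in>OUT. x \<in> A} = {}" unfolding G_eq OUT_def by auto
      ultimately show ?thesis unfolding gx_def ox_def by (intro card_Un_disjoint)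
    qed
    ultimately show "deg F x = gx x + ox x" unfolding deg_def by simp
  qed
  have mxt: "\<And>x. mx x \<le> t" unfolding mx_def t_def using finMs by (intro card_mono) auto
  have pc: "\<forall>x\<in>P. int (deg (pileG F P) x) \<ge> 2 ^ (d - 1) - 2 * int c + 2"
  proof
    fix x assume xP: "x \<in> P"
    have "deg (pileG F P) x = gx x" unfolding deg_def gx_def G_def by simp
    moreover have "int (gx x) = 2 ^ (d - 1) - int (mx x)" using split1[OF xP]
      by (metis add_diff_cancel_right' of_nat_add of_nat_numeral of_nat_power)
    ultimately show "int (deg (pileG F P) x) \<ge> 2 ^ (d - 1) - 2 * int c + 2" using mxt[of x] tb by linarith
  qed
  have pd: "\<forall>x\<in>P. bad d F x \<longrightarrow> {x} \<in> pileN F P"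
  proof (intro ballI impI)
    fix x assume xP: "x \<in> P" and bx: "bad d F x"
    have cn: "card (nbhd F x) = d" using bx unfolding bad_def by simp
    hence finN: "finite (nbhd F x)" using assms(1) by (metis card.infinite not_numeral_le_zero)
    have Nx: "nbhd F x = P" using card_subset_eq[OF finN Pnb[OF xP]] cn cP by simp
    have "P - {x} \<notin> F"
    proof
      assume PF: "P - {x} \<in> F"
      have s1: "Pow (P - {x}) \<subseteq> G" using her[OF PF] G_eq by auto
      have s2: "{A\<in>F. x \<in> A} \<subseteq> G" using nbsub Nx G_eq by auto
      have "card (Pow (P - {x}) \<union> {A\<in>F. x \<in> A}) = card (Pow (P - {x})) + card {A\<in>F. x \<in> A}"
        using finP finF by (intro card_Un_disjoint) auto
      moreover have "card (Pow (P - {x}) \<union> {A\<in>F. x \<in> A}) \<le> card G"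
        using s1 s2 finG by (intro card_mono) auto
      moreover have "card (Pow (P - {x})) = 2 ^ (d - 1)" using finP xP cP by (simp add: card_Pow)
      moreover have "card {A\<in>F. x \<in> A} = deg F x" unfolding deg_def by simp
      ultimately have "2 ^ (d - 1) + (2 ^ (d - 1) - c + 1) \<le> card G" using degP[OF xP] by linarith
      moreover have "card G + t = 2 * 2 ^ (d - 1)" using cardGM d1 unfolding t_def by simp
      ultimately show False using cle ta by (rule ar2)
    qed
    hence "P - {x} \<in> Ms" unfolding Ms_eq G_eq by auto
    moreover have "{x} = P - (P - {x})" using xP by auto
    ultimately show "{x} \<in> pileN F P" unfolding pileN_def Ms_def by blast
  qed
  define GS where "GS = {x\<in>P. good d F x}"
  have goody: "\<And>x. x \<in> GS \<Longrightarrow> \<exists>y. y \<notin> P \<and> {x, y} \<in> F"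
  proof -
    fix x assume "x \<in> GS"
    hence xP: "x \<in> P" and gd: "d + 1 \<le> card (nbhd F x)" unfolding GS_def good_def by auto
    have "\<not> nbhd F x \<subseteq> P"
    proof
      assume "nbhd F x \<subseteq> P"
      hence "card (nbhd F x) \<le> d" using card_mono[OF finP] cP by metis
      thus False using gd by linarith
    qed
    then obtain y where "y \<in> nbhd F x" "y \<notin> P" by auto
    then obtain A where "A \<in> F" "x \<in> A" "y \<in> A" unfolding nbhd_def by auto
    hence "{x, y} \<in> F" using her by auto
    thus "\<exists>y. y \<notin> P \<and> {x, y} \<in> F" using \<open>y \<notin> P\<close> by blast
  qed
  then obtain yf where yf: "\<And>x. x \<in> GS \<Longrightarrow> yf x \<notin> P \<and> {x, yf x} \<in> F" by metis
  have gB: "real (card GS) / 2 \<le> B"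
  proof -
    define E where "E = (\<lambda>x. {x, yf x}) ` GS"
    have GSP: "GS \<subseteq> P" unfolding GS_def by auto
    have EO: "E \<subseteq> OUT" unfolding E_def OUT_def using yf GSP by auto
    have inj: "inj_on (\<lambda>x. {x, yf x}) GS"
    proof (rule inj_onI)
      fix x x' assume "x \<in> GS" "x' \<in> GS" "{x, yf x} = {x', yf x'}"
      thus "x = x'" using yf GSP by (metis doubleton_eq_iff subsetD)
    qed
    have "(\<Sum>A\<in>E. h A) = (\<Sum>x\<in>GS. h {x, yf x})" unfolding E_def using inj by (rule sum.reindex[unfolded comp_def])
    also have "\<dots> = (\<Sum>x\<in>GS. 1/2)"
    proof (rule sum.cong[OF refl])
      fix x assume xg: "x \<in> GS"
      hence "x \<in> P" "yf x \<notin> P" using yf GSP by auto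
      hence "{x, yf x} \<inter> P = {x}" "x \<noteq> yf x" by auto
      thus "h {x, yf x} = 1/2" unfolding h_def by simp
    qed
    finally have "(\<Sum>A\<in>E. h A) = real (card GS) / 2" by simp
    moreover have "(\<Sum>A\<in>E. h A) \<le> B" unfolding B_def using finOUT EO hnn by (intro sum_mono2) auto
    ultimately show ?thesis by simp
  qed
  have Mbig: "\<And>M. M \<in> Ms \<Longrightarrow> 8 * (d - card M) \<le> d"
  proof -
    fix M assume MM: "M \<in> Ms"
    hence MP: "M \<subseteq> P" and MG: "M \<notin> F" using Ms_eq G_eq by auto
    have "(\<lambda>N. P - N) ` Pow (P - M) \<subseteq> Ms"
    proof
      fix X assume "X \<in> (\<lambda>N. P - N) ` Pow (P - M)"
      then obtain N where N: "N \<subseteq> P - M" "X = P - N" by auto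
      hence "M \<subseteq> X" "X \<subseteq> P" using MP by auto
      hence "X \<notin> F" using her MG by blast
      thus "X \<in> Ms" using \<open>X \<subseteq> P\<close> Ms_eq G_eq by auto
    qed
    moreover have "inj_on (\<lambda>N. P - N) (Pow (P - M))" by (rule inj_onI) auto
    ultimately have "card (Pow (P - M)) \<le> t" unfolding t_def using finMs
      by (metis card_image card_mono)
    moreover have "card (Pow (P - M)) = 2 ^ (d - card M)"
      using finP MP cP by (simp add: card_Pow card_Diff_subset finite_subset)
    ultimately have "2 ^ (d - card M) < 2 * d" using tb assms(3) by linarith
    thus "8 * (d - card M) \<le> d" using assms(1) by (rule L3)
  qed
  have Bd: "B < real d" using Bk tb assms(3) by linarith
  have OUTsmall: "\<And>A. A \<in> OUT \<Longrightarrow> 4 * card A \<le> d"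
  proof -
    fix A assume AO: "A \<in> OUT"
    then obtain x y where xA: "x \<in> A" "x \<in> P" and yA: "y \<in> A" "y \<notin> P" and AF: "A \<in> F"
      unfolding OUT_def by auto
    have finA: "finite A" using AF assms(4) finite_subset by blast
    define r where "r = card A"
    have xy: "x \<noteq> y" using xA yA by auto
    have "card {x, y} \<le> card A" using finA xA yA by (intro card_mono) auto
    hence r2: "2 \<le> r" unfolding r_def using xy by simp
    define Fam where "Fam = (\<lambda>T. insert x (insert y T)) ` Pow (A - {x, y})"
    have FamO: "Fam \<subseteq> OUT" unfolding Fam_def OUT_def using xA yA by (auto intro!: her[OF AF])
    have inj: "inj_on (\<lambda>T. insert x (insert y T)) (Pow (A - {x, y}))"
    proof (rule inj_onI)
      fix T T' assume "T \<in> Pow (A - {x, y})" "T' \<in> Pow (A - {x, y})"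
        "insert x (insert y T) = insert x (insert y T')"
      thus "T = T'" by blast
    qed
    have cF: "card Fam = 2 ^ (r - 2)" unfolding Fam_def r_def using inj finA xA yA xy
      by (simp add: card_image card_Pow card_Diff_subset)
    have "(\<Sum>S\<in>Fam. 1 / real r) \<le> (\<Sum>S\<in>Fam. h S)"
    proof (rule sum_mono)
      fix S assume "S \<in> Fam"
      hence SA: "S \<subseteq> A" and xS: "x \<in> S" unfolding Fam_def using xA yA by auto
      have finS: "finite S" using SA finA finite_subset by blast
      have "S \<inter> P \<noteq> {}" using xS xA by auto
      hence "1 \<le> card (S \<inter> P)" using finS by (simp add: card_gt_0_iff Suc_le_eq)
      moreover have "card S \<le> r" unfolding r_def using SA finA by (rule card_mono[rotated])
      moreover have "0 < card S" using xS finS card_gt_0_iff by blast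
      ultimately have "1 / real r \<le> 1 / real (card S)" "1 / real (card S) \<le> real (card (S \<inter> P)) / real (card S)"
        by (auto intro: frac_le divide_right_mono)
      thus "1 / real r \<le> h S" unfolding h_def by linarith
    qed
    also have "\<dots> \<le> B" unfolding B_def using finOUT FamO hnn by (intro sum_mono2) auto
    finally have "real (2 ^ (r - 2)) / real r \<le> B" using cF by simp
    hence "real (2 ^ (r - 2)) \<le> B * real r" using r2 by (simp add: divide_le_eq)
    moreover have "B * real r < real d * real r" using Bd r2 by (intro mult_strict_right_mono) auto
    ultimately have "real (2 ^ (r - 2)) < real r * real d" by (simp add: mult.commute)
    hence "real (2 ^ (r - 2)) < real (r * d)" by simp
    hence "2 ^ (r - 2) < r * d" by (simp only: of_nat_less_iff)
    thus "4 * card A \<le> d" unfolding r_def[symmetric] using assms(1) by (rule L4)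
  qed
  have S1: "(\<Sum>x\<in>P. real (mx x)) = (\<Sum>M\<in>Ms. real (card M))"
  proof -
    have "(\<Sum>x\<in>P. real (mx x)) = (\<Sum>x\<in>P. \<Sum>A\<in>{A\<in>Ms. x\<in>A}. (1::real))" unfolding mx_def by simp
    also have "\<dots> = (\<Sum>A\<in>Ms. real (card (A \<inter> P)) * 1)" by (rule sum_swap_card[OF finP finMs])
    also have "\<dots> = (\<Sum>M\<in>Ms. real (card M))" using Ms_eq by (intro sum.cong) (auto simp: Int_absorb2)
    finally show ?thesis .
  qed
  have S2: "(\<Sum>x\<in>P. real (ox x)) = (\<Sum>A\<in>OUT. real (card (A \<inter> P)))"
  proof -
    have "(\<Sum>x\<in>P. real (ox x)) = (\<Sum>x\<in>P. \<Sum>A\<in>{A\<in>OUT. x\<in>A}. (1::real))" unfolding ox_def by simp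
    also have "\<dots> = (\<Sum>A\<in>OUT. real (card (A \<inter> P)) * 1)" by (rule sum_swap_card[OF finP finOUT])
    finally show ?thesis by simp
  qed
  have I1: "real t * (7 * real d / 8) \<le> (\<Sum>M\<in>Ms. real (card M))"
  proof -
    have "(\<Sum>M\<in>Ms. 7 * real d / 8) \<le> (\<Sum>M\<in>Ms. real (card M))"
    proof (rule sum_mono)
      fix M assume "M \<in> Ms"
      hence "8 * (d - card M) \<le> d" "card M \<le> d" using Mbig Ms_eq cP finP card_mono by auto
      thus "7 * real d / 8 \<le> real (card M)" by linarith
    qed
    thus ?thesis unfolding t_def by simp
  qed
  have I2: "(\<Sum>x\<in>P. real (mx x)) \<le> (\<Sum>x\<in>P. real (ox x) + (real c - 1))"
  proof (rule sum_mono)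
    fix x assume xP: "x \<in> P"
    have "mx x \<le> ox x + (c - 1)" using split1[OF xP] split2[OF xP] degP[OF xP] cle assms(2) by linarith
    thus "real (mx x) \<le> real (ox x) + (real c - 1)" using assms(2) by linarith
  qed
  have I3: "(\<Sum>A\<in>OUT. real (card (A \<inter> P))) \<le> real d / 4 * B"
  proof -
    have "(\<Sum>A\<in>OUT. real (card (A \<inter> P))) \<le> (\<Sum>A\<in>OUT. real d / 4 * h A)"
    proof (rule sum_mono)
      fix A assume AO: "A \<in> OUT"
      hence "4 * card A \<le> d" by (rule OUTsmall)
      moreover have "0 < card A"
      proof -
        have "A \<in> F" "A \<noteq> {}" using AO unfolding OUT_def by auto
        moreover hence "finite A" using assms(4) finite_subset by blast
        ultimately show ?thesis by (simp add: card_gt_0_iff)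
      qed
      ultimately have q1: "real (card A) \<le> real d / 4" and q2: "0 < real (card A)" by auto
      have "real (card (A \<inter> P)) = real (card (A \<inter> P)) / real (card A) * real (card A)" using q2 by simp
      also have "\<dots> \<le> real (card (A \<inter> P)) / real (card A) * (real d / 4)" using q1 by (intro mult_left_mono) auto
      finally show "real (card (A \<inter> P)) \<le> real d / 4 * h A" unfolding h_def by (simp add: mult.commute)
    qed
    thus ?thesis unfolding B_def by (simp add: sum_distrib_left)
  qed
  have sumc: "(\<Sum>x\<in>P. real (ox x) + (real c - 1)) = (\<Sum>x\<in>P. real (ox x)) + real d * (real c - 1)"
    using cP by (simp add: sum.distrib)
  have key: "real d * (7 * real t / 8) \<le> real d * ((real c - 1) + B / 4)"
    using I1 I2 I3 S1 S2 sumc by (simp add: algebra_simps)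
  have key2: "7 * real t / 8 \<le> (real c - 1) + B / 4"
    using key assms(1) by (simp add: mult_le_cancel_left_pos)
  have pe: "real (card GS) \<le> real d / 2 - 1"
    using key2 Bk gB assms(1) assms(3) by linarith
  show ?thesis using ta tb pc pd pe pt unfolding GS_def by simp
qed

end
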